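(* Suppose that there exist a continuously differentiable, uniformly bounded, uniformly coercive, and positive-definite operator $P(t)\in \mathscr{L}(X)$ defined for any $t\in\mathbb{R}_{\geq0}$, nonnegative and locally integrable functions $a_1(t), a_2(t)$ defined over $[0,+\infty)$ and satisfying \begin{align*} \lim_{t\rightarrow +\infty}\int_0^t a_1(\tau)\,{\rm d}\tau=+\infty\quad \text{and}\quad a_2(t)\leq M a_1(t) \end{align*} with a constant $M\geq 0$, constants $m_1,m_2>2$, and a function $\zeta \in\mathcal{K}$, such that \begin{align*} \langle ( A^*(t)P(t)+P(t)A(t)+\dot{P}(t))x , x\rangle+2\langle F(t, x, u), P(t)x \rangle \leq -a_1(t)\|x\|^2_{X}+ a_2(t) \left(\|x\|^{m_1}_X +\|x\|^{m_2}_X \right)+ \zeta(\|u\|_{U}), \quad \forall x\in D(A),\ u\in U,\ t\in\mathbb{R}_{\geq 0}. \end{align*} Then $V(t,x):=\langle P(t)x, x \rangle$ is an LiISS Lyapunov functional (LiISS-LF), and therefore the system $\dot x(t)=A(t)x(t)+F(t,x(t),u(t))$, $x(0)=x_0$ is LiISS. In particular, if $a_2\equiv 0$ on $[0,+\infty)$, then $V(t,x):=\langle P(t)x, x \rangle$ is an iISS Lyapunov functional (iISS-LF), and hence the system is iISS.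
   Context: $X$ is a Hilbert space with inner product $\langle\cdot,\cdot\rangle$ and norm $\|\cdot\|_X=\sqrt{\langle\cdot,\cdot\rangle}$, $U\subset X$ is a normed linear space with norm $\|\cdot\|_U$, and $\mathscr{L}(X)$ denotes the space of bounded linear operators on $X$. Consider the non-autonomous system $\dot{x}(t)=A(t)x(t)+F(t,x(t),u(t))$, $t\geq 0$, $x(0)=x_0$, where for each $t\geq0$ the linear operator $A(t):D(A(t))\subset X\to X$ generates an analytic semigroup on $X$ (with adjoint $A^*(t)$), $X_\alpha$ ($\alpha\in[0,1)$) is the fractional power space of $-A(t)$ with norm $\|(-A(t))^\alpha x\|_X$, $F:\mathbb{R}_{>0}\times X_\alpha\times U\to X$, $x_0\in D(A(0))$, and inputs $u\in C(\mathbb{R}_{\geq0},U)$; solutions are classical solutions. $\mathcal{K}$ is the class of continuous, strictly increasing functions $\gamma:\mathbb{R}_{\ge0}\to\mathbb{R}_{\ge0}$ with $\gamma(0)=0$; $\mathcal{K}_\infty$ the unbounded ones; $\mathcal{KL}$ the usual class. The system is LiISS if there exist $R>0$, $\gamma_0,\gamma\in\mathcal{K}$, $\sigma_0,\sigma\in\mathcal{K}_\infty$, $\beta\in\mathcal{KL}$ such that $\|x(t,x_0,u)\|_X\le\beta(\|x_0\|_X,t)+\sigma(\int_0^t\gamma(\|u(s)\|_U)ds)$ for all $t\ge0$ whenever $x_0\in D(A(0))$, $u\in C(\mathbb{R}_{\ge0},U)$ satisfy $\|x_0\|_X+\sigma_0(\int_0^t\gamma_0(\|u(s)\|_U)ds)\le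 R$ for all $t>0$; it is iISS if this estimate holds for all such $(x_0,u)$. A continuously differentiable $V:\mathbb{R}_{\ge0}\times X\to\mathbb{R}_{\ge0}$ is an LiISS-LF if (i) $\alpha_1(\|x\|_X)\le V(t,x)\le\alpha_2(\|x\|_X)$ for some $\alpha_1,\alpha_2\in\mathcal{K}_\infty$, and (ii) there exist nonnegative locally integrable $g_1,g_2$ with $\int_0^t g_1\to+\infty$ and $g_2\le g_1$, $\theta_1,\theta_2\in\mathcal{K}$ with $\theta_2(s)\le\theta_1(s)$ on some $[0,R']$, $R'>0$, and $\phi\in\mathcal{K}$ such that along trajectories $\dot V(t,x)\le -g_1(t)\theta_1(\|x\|_X)+g_2(t)\theta_2(\|x\|_X)+\phi(\|u(t)\|_U)$; it is an iISS-LF if additionally $g_2\equiv0$. *)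

theory Defs
  imports "HOL-Analysis.Analysis"
begin

definition class_K :: "(real \<Rightarrow> real) \<Rightarrow> bool" where
  "class_K \<gamma> \<longleftrightarrow> continuous_on {0..} \<gamma> \<and> strict_mono_on {0..} \<gamma> \<and> \<gamma> 0 = 0"

definition class_Kinf :: "(real \<Rightarrow> real) \<Rightarrow> bool" where
  "class_Kinf \<gamma> \<longleftrightarrow> class_K \<gamma> \<and> filterlim \<gamma> at_top at_top"

definition class_KL :: "(real \<Rightarrow> real \<Rightarrow> real) \<Rightarrow> bool" where
  "class_KL \<beta> \<longleftrightarrow> continuous_on ({0..} \<times> {0..}) (\<lambda>(r, t). \<beta> r t)
     \<and> (\<forall>t\<ge>0. class_K (\<lambda>r. \<beta> r t))
     \<and> (\<forall>r\<ge>0. antimono_on {0..} (\<beta> r) \<and> ((\<beta> r) \<longlongrightarrow> 0) at_top)"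

definition C0_semigroup :: "(real \<Rightarrow> 'x::real_normed_vector \<Rightarrow>\<^sub>L 'x) \<Rightarrow> bool" where
  "C0_semigroup T \<longleftrightarrow> T 0 = id_blinfun
     \<and> (\<forall>s\<ge>0. \<forall>t\<ge>0. T (s + t) = T s o\<^sub>L T t)
     \<and> (\<forall>x. ((\<lambda>t. T t x) \<longlongrightarrow> x) (at_right 0))"

definition is_generator :: "(real \<Rightarrow> 'x::real_normed_vector \<Rightarrow>\<^sub>L 'x) \<Rightarrow> ('x \<Rightarrow> 'x) \<Rightarrow> 'x set \<Rightarrow> bool" where
  "is_generator T A D \<longleftrightarrow>
     D = {x. \<exists>y. ((\<lambda>h. (T h x - x) /\<^sub>R h) \<longlongrightarrow> y) (at_right 0)}
     \<and> (\<forall>x\<in>D. ((\<lambda>h. (T h x - x) /\<^sub>R h) \<longlongrightarrow> A x) (at_right 0))"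

text \<open>Analytic semigroup, via the standard real-variable characterisation:
  T(t) maps X into D(A) for t > 0 and sup over 0 < t <= 1 of t * norm (A T(t)) is finite.\<close>
definition generates_analytic_semigroup :: "('x::real_normed_vector \<Rightarrow> 'x) \<Rightarrow> 'x set \<Rightarrow> bool" where
  "generates_analytic_semigroup A D \<longleftrightarrow>
     (\<exists>T. C0_semigroup T \<and> is_generator T A D
        \<and> (\<forall>t>0. \<forall>x. blinfun_apply (T t) x \<in> D)
        \<and> (\<exists>C. \<forall>t\<in>{0<..1}. \<forall>x. norm (A (T t x)) \<le> C / t * norm x))"

definition classical_solution ::
  "(real \<Rightarrow> 'x::real_normed_vector \<Rightarrow> 'x) \<Rightarrow> (real \<Rightarrow> 'x set) \<Rightarrow> (real \<Rightarrow> 'x \<Rightarrow> 'u \<Rightarrow> 'x)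
   \<Rightarrow> (real \<Rightarrow> 'u) \<Rightarrow> 'x \<Rightarrow> (real \<Rightarrow> 'x) \<Rightarrow> bool" where
  "classical_solution A D F u x0 x \<longleftrightarrow>
     x 0 = x0 \<and> continuous_on {0..} x
     \<and> (\<forall>t>0. x t \<in> D t \<and> (x has_vector_derivative (A t (x t) + F t (x t) (u t))) (at t))
     \<and> continuous_on {0<..} (\<lambda>t. A t (x t) + F t (x t) (u t))"

definition LiISS ::
  "(real \<Rightarrow> 'x::real_normed_vector \<Rightarrow> 'x) \<Rightarrow> (real \<Rightarrow> 'x set) \<Rightarrow> (real \<Rightarrow> 'x \<Rightarrow> 'u::real_normed_vector \<Rightarrow> 'x) \<Rightarrow> bool" where
  "LiISS A D F \<longleftrightarrow>
     (\<exists>R \<gamma>0 \<gamma> \<sigma>0 \<sigma> \<beta>. R > 0 \<and> class_K \<gamma>0 \<and> class_K \<gamma> \<and> class_Kinf \<sigma>0 \<and> class_Kinf \<sigma> \<and> class_KL \<beta> \<and>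
       (\<forall>x0 u x. x0 \<in> D 0 \<longrightarrow> continuous_on {0..} u \<longrightarrow> classical_solution A D F u x0 x \<longrightarrow>
          (\<forall>t>0. norm x0 + \<sigma>0 (integral {0..t} (\<lambda>s. \<gamma>0 (norm (u s)))) \<le> R) \<longrightarrow>
          (\<forall>t\<ge>0. norm (x t) \<le> \<beta> (norm x0) t + \<sigma> (integral {0..t} (\<lambda>s. \<gamma> (norm (u s)))))))"

definition iISS ::
  "(real \<Rightarrow> 'x::real_normed_vector \<Rightarrow> 'x) \<Rightarrow> (real \<Rightarrow> 'x set) \<Rightarrow> (real \<Rightarrow> 'x \<Rightarrow> 'u::real_normed_vector \<Rightarrow> 'x) \<Rightarrow> bool" where
  "iISS A D F \<longleftrightarrow>
     (\<exists>\<gamma> \<sigma> \<beta>. class_K \<gamma> \<and> class_Kinf \<sigma> \<and> class_KL \<beta> \<and>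
       (\<forall>x0 u x. x0 \<in> D 0 \<longrightarrow> continuous_on {0..} u \<longrightarrow> classical_solution A D F u x0 x \<longrightarrow>
          (\<forall>t\<ge>0. norm (x t) \<le> \<beta> (norm x0) t + \<sigma> (integral {0..t} (\<lambda>s. \<gamma> (norm (u s)))))))"

definition C1_nonneg_functional :: "(real \<Rightarrow> 'x::real_normed_vector \<Rightarrow> real) \<Rightarrow> bool" where
  "C1_nonneg_functional V \<longleftrightarrow>
     (\<forall>t\<ge>0. \<forall>x. V t x \<ge> 0) \<and>
     (\<exists>V'. (\<forall>p\<in>{0..} \<times> UNIV. ((\<lambda>(t, x). V t x) has_derivative blinfun_apply (V' p)) (at p within ({0..} \<times> UNIV)))
         \<and> continuous_on ({0..} \<times> UNIV) V')"

definition locally_integrable_nonneg :: "(real \<Rightarrow> real) \<Rightarrow> bool" where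
  "locally_integrable_nonneg g \<longleftrightarrow> (\<forall>t\<ge>0. g t \<ge> 0) \<and> (\<forall>b\<ge>0. g integrable_on {0..b})"

definition LF_decay ::
  "(real \<Rightarrow> 'x::real_normed_vector \<Rightarrow> 'x) \<Rightarrow> (real \<Rightarrow> 'x set) \<Rightarrow> (real \<Rightarrow> 'x \<Rightarrow> 'u::real_normed_vector \<Rightarrow> 'x)
   \<Rightarrow> (real \<Rightarrow> 'x \<Rightarrow> real) \<Rightarrow> (real \<Rightarrow> real) \<Rightarrow> (real \<Rightarrow> real) \<Rightarrow> (real \<Rightarrow> real) \<Rightarrow> (real \<Rightarrow> real)
   \<Rightarrow> (real \<Rightarrow> real) \<Rightarrow> bool" where
  "LF_decay A D F V g1 g2 \<theta>1 \<theta>2 \<phi> \<longleftrightarrow>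
     locally_integrable_nonneg g1 \<and> locally_integrable_nonneg g2 \<and>
     filterlim (\<lambda>t. integral {0..t} g1) at_top at_top \<and> (\<forall>t\<ge>0. g2 t \<le> g1 t) \<and>
     class_K \<theta>1 \<and> class_K \<theta>2 \<and> (\<exists>R'>0. \<forall>s\<in>{0..R'}. \<theta>2 s \<le> \<theta>1 s) \<and> class_K \<phi> \<and>
     (\<forall>x0 u x. x0 \<in> D 0 \<longrightarrow> continuous_on {0..} u \<longrightarrow> classical_solution A D F u x0 x \<longrightarrow>
        (\<forall>t>0. \<exists>d. ((\<lambda>s. V s (x s)) has_real_derivative d) (at t) \<and>
            d \<le> - g1 t * \<theta>1 (norm (x t)) + g2 t * \<theta>2 (norm (x t)) + \<phi> (norm (u t))))"

definition LiISS_LF ::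
  "(real \<Rightarrow> 'x::real_normed_vector \<Rightarrow> 'x) \<Rightarrow> (real \<Rightarrow> 'x set) \<Rightarrow> (real \<Rightarrow> 'x \<Rightarrow> 'u::real_normed_vector \<Rightarrow> 'x)
   \<Rightarrow> (real \<Rightarrow> 'x \<Rightarrow> real) \<Rightarrow> bool" where
  "LiISS_LF A D F V \<longleftrightarrow> C1_nonneg_functional V \<and>
     (\<exists>\<alpha>1 \<alpha>2. class_Kinf \<alpha>1 \<and> class_Kinf \<alpha>2 \<and> (\<forall>t\<ge>0. \<forall>x. \<alpha>1 (norm x) \<le> V t x \<and> V t x \<le> \<alpha>2 (norm x))) \<and>
     (\<exists>g1 g2 \<theta>1 \<theta>2 \<phi>. LF_decay A D F V g1 g2 \<theta>1 \<theta>2 \<phi>)"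

definition iISS_LF ::
  "(real \<Rightarrow> 'x::real_normed_vector \<Rightarrow> 'x) \<Rightarrow> (real \<Rightarrow> 'x set) \<Rightarrow> (real \<Rightarrow> 'x \<Rightarrow> 'u::real_normed_vector \<Rightarrow> 'x)
   \<Rightarrow> (real \<Rightarrow> 'x \<Rightarrow> real) \<Rightarrow> bool" where
  "iISS_LF A D F V \<longleftrightarrow> C1_nonneg_functional V \<and>
     (\<exists>\<alpha>1 \<alpha>2. class_Kinf \<alpha>1 \<and> class_Kinf \<alpha>2 \<and> (\<forall>t\<ge>0. \<forall>x. \<alpha>1 (norm x) \<le> V t x \<and> V t x \<le> \<alpha>2 (norm x))) \<and>
     (\<exists>g1 \<theta>1 \<theta>2 \<phi>. LF_decay A D F V g1 (\<lambda>_. 0) \<theta>1 \<theta>2 \<phi>)"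

definition positive_definite_op :: "('x::real_inner \<Rightarrow>\<^sub>L 'x) \<Rightarrow> bool" where
  "positive_definite_op Q \<longleftrightarrow> (\<forall>x y. inner (Q x) y = inner x (Q y)) \<and> (\<forall>x. x \<noteq> 0 \<longrightarrow> inner (Q x) x > 0)"

end

theory Submission
  imports Defs
begin


lemma comparison:
  fixes V w a dV dw :: "real \<Rightarrow> real" and k t :: real
  assumes t: "t \<ge> 0" and k: "k \<ge> 0"
    and Vc: "continuous_on {0..t} V" and Vnn: "\<forall>s\<in>{0..t}. V s \<ge> 0"
    and wc: "continuous_on {0..t} w" and w0: "w 0 = 0" and wnn: "\<forall>s\<in>{0..t}. w s \<ge> 0"
    and dVd: "\<forall>s\<in>{0<..<t}. (V has_real_derivative dV s) (at s)"
    and dwd: "\<forall>s\<in>{0<..<t}. (w has_real_derivative dw s) (at s)"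
    and le: "\<forall>s\<in>{0<..<t}. dV s \<le> - k * a s * V s + dw s"
    and ann: "\<forall>s\<in>{0..t}. a s \<ge> 0" and aint: "a integrable_on {0..t}"
  shows "V t \<le> V 0 / (1 + k * integral {0..t} a) + w t"
proof -
  define Z where "Z = (\<lambda>s. V s - w s)"
  have Zc: "continuous_on {0..t} Z" unfolding Z_def using Vc wc by (intro continuous_intros)
  have Zd: "\<forall>s\<in>{0<..<t}. (Z has_real_derivative (dV s - dw s)) (at s)"
    unfolding Z_def using dVd dwd by (auto intro!: derivative_eq_intros)
  have Zd0: "\<forall>s\<in>{0<..<t}. dV s - dw s \<le> 0"
  proof
    fix s assume s: "s \<in> {0<..<t}"
    have "k * a s * V s \<ge> 0" using s k ann Vnn by auto
    moreover have "dV s \<le> - k * a s * V s + dw s" using le s by blast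
    ultimately show "dV s - dw s \<le> 0" by linarith
  qed
  have Zmono: "Z s \<ge> Z t" if s: "s \<in> {0..t}" for s
  proof (rule DERIV_nonpos_imp_decreasing_open[of s t Z])
    show "s \<le> t" using s by simp
    show "continuous_on {s..t} Z" by (rule continuous_on_subset[OF Zc]) (use s in auto)
    fix x assume x: "s < x" "x < t"
    then have "x \<in> {0<..<t}" using s by simp
    then show "\<exists>y. (Z has_real_derivative y) (at x) \<and> y \<le> 0" using Zd Zd0 by blast
  qed
  have I0: "integral {0..t} a \<ge> 0" using ann by (intro integral_nonneg[OF aint]) auto
  show ?thesis
  proof (cases "Z t \<le> 0")
    case True
    have "V 0 / (1 + k * integral {0..t} a) \<ge> 0" using Vnn t k I0 by auto
    then show ?thesis using True unfolding Z_def by auto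
  next
    case False
    define g where "g = (\<lambda>s. if s \<in> {0<..<t} then dV s - dw s else - k * Z t * a s)"
    have FT: "(g has_integral (Z t - Z 0)) {0..t}"
      apply (rule fundamental_theorem_of_calculus_interior[OF t Zc])
      using Zd unfolding g_def by (auto simp: has_real_derivative_iff_has_vector_derivative[symmetric])
    have G: "((\<lambda>s. - k * Z t * a s) has_integral (- k * Z t * integral {0..t} a)) {0..t}"
      using has_integral_mult_right[OF integrable_integral[OF aint], of "- k * Z t"] by simp
    have "Z t - Z 0 \<le> - k * Z t * integral {0..t} a"
    proof (rule has_integral_le[OF FT G])
      fix s assume s: "s \<in> {0..t}"
      show "g s \<le> - k * Z t * a s"
      proof (cases "s \<in> {0<..<t}")
        case True
        have "V s \<ge> Z s" unfolding Z_def using wnn s by auto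
        also have "Z s \<ge> Z t" using Zmono s by auto
        finally have "k * a s * Z t \<le> k * a s * V s" using k ann s False by (intro mult_left_mono) auto
        moreover have "dV s \<le> - k * a s * V s + dw s" using le True by blast
        ultimately show ?thesis using True unfolding g_def by (simp add: algebra_simps)
      qed (auto simp: g_def)
    qed
    then have "Z t * (1 + k * integral {0..t} a) \<le> Z 0" by (auto simp: algebra_simps)
    moreover have "1 + k * integral {0..t} a > 0" using k I0 by (smt (verit) mult_nonneg_nonneg)
    ultimately have "Z t \<le> Z 0 / (1 + k * integral {0..t} a)" by (simp add: pos_le_divide_eq)
    then show ?thesis unfolding Z_def using w0 by auto
  qed
qed



lemma deriv_V:
  fixes P :: "real \<Rightarrow> 'x::real_inner \<Rightarrow>\<^sub>L 'x" and x :: "real \<Rightarrow> 'x"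
  assumes dP: "(P has_vector_derivative P't) (at t)" and dx: "(x has_vector_derivative x') (at t)"
  shows "((\<lambda>s. inner (P s (x s)) (x s)) has_real_derivative
     (inner (P t (x t)) x' + inner (P t x') (x t) + inner (P't (x t)) (x t))) (at t)"
proof -
  have "((\<lambda>s. P s (x s)) has_vector_derivative (P t x' + P't (x t))) (at t)"
    using bounded_bilinear.has_vector_derivative[OF bounded_bilinear_blinfun_apply dP dx] by simp
  from bounded_bilinear.has_vector_derivative[OF bounded_bilinear_inner this dx] show ?thesis
    by (simp add: has_real_derivative_iff_has_vector_derivative inner_add_left algebra_simps)
qed



lemma C1_V:
  fixes P P' :: "real \<Rightarrow> 'x::real_inner \<Rightarrow>\<^sub>L 'x"
  assumes P_deriv: "\<forall>t\<ge>0. (P has_vector_derivative P' t) (at t within {0..})"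
    and P'_cont: "continuous_on {0..} P'"
    and sym: "\<forall>t\<ge>0. \<forall>y z. inner (P t y) z = inner y (P t z)"
    and nn: "\<forall>t\<ge>0. \<forall>x. inner (P t x) x \<ge> 0"
  shows "C1_nonneg_functional (\<lambda>t x. inner (P t x) x)"
proof -
  define S where "S = ({0..} \<times> UNIV :: (real \<times> 'x) set)"
  define V' where "V' = (\<lambda>p::real\<times>'x. (inner (P' (fst p) (snd p)) (snd p)) *\<^sub>R fst_blinfun
        + (blinfun_inner_left (2 *\<^sub>R P (fst p) (snd p)) o\<^sub>L snd_blinfun))"
  have Pc: "continuous_on {0..} P"
  proof (rule continuous_on_eq_continuous_within[THEN iffD2], intro ballI)
    fix t :: real assume "t \<in> {0..}"
    then have "(P has_vector_derivative P' t) (at t within {0..})" using P_deriv by auto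
    then show "continuous (at t within {0..}) P"
      by (rule has_vector_derivative_continuous)
  qed
  have der: "((\<lambda>(t, x). inner (P t x) x) has_derivative blinfun_apply (V' p)) (at p within S)"
    if p: "p \<in> S" for p
  proof -
    obtain t x where px: "p = (t, x)" by (cases p)
    have t: "t \<ge> 0" using p px S_def by auto
    have dP: "(P has_derivative (\<lambda>h. h *\<^sub>R P' t)) (at (fst p) within fst ` S)"
      using P_deriv t px unfolding S_def has_vector_derivative_def by auto
    have d1: "((\<lambda>q. P (fst q)) has_derivative (\<lambda>h. fst h *\<^sub>R P' t)) (at p within S)"
      using diff_chain_within[OF has_derivative_fst[OF has_derivative_ident] dP]
      by (simp add: o_def)
    have d2: "((\<lambda>q. P (fst q) (snd q)) has_derivative (\<lambda>h. P t (snd h) + (fst h *\<^sub>R P' t) x)) (at p within S)"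
      using bounded_bilinear.FDERIV[OF bounded_bilinear_blinfun_apply d1 has_derivative_snd[OF has_derivative_ident]]
      by (simp add: px)
    have d3: "((\<lambda>q. inner (P (fst q) (snd q)) (snd q)) has_derivative
        (\<lambda>h. inner (P t x) (snd h) + inner (P t (snd h) + (fst h *\<^sub>R P' t) x) x)) (at p within S)"
      using bounded_bilinear.FDERIV[OF bounded_bilinear_inner d2 has_derivative_snd[OF has_derivative_ident]]
      by (simp add: px)
    show ?thesis
      apply (rule has_derivative_eq_rhs)
       apply (rule has_derivative_transform[OF p _ d3])
       apply (simp add: case_prod_beta)
      using sym t by (auto simp: V'_def px fun_eq_iff inner_add_left inner_commute algebra_simps
          blinfun.add_left blinfun.scaleR_left)
  qed
  have cont: "continuous_on S V'"
  proof -
    have "continuous_on S (\<lambda>p. P' (fst p))"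
      unfolding S_def by (rule continuous_on_compose2[OF P'_cont]) (auto intro: continuous_intros)
    moreover have "continuous_on S (\<lambda>p. P (fst p))"
      unfolding S_def by (rule continuous_on_compose2[OF Pc]) (auto intro: continuous_intros)
    ultimately show ?thesis unfolding V'_def by (intro continuous_intros) auto
  qed
  show ?thesis
    unfolding C1_nonneg_functional_def using nn der cont S_def by blast
qed



lemma class_K_sq: "c > 0 \<Longrightarrow> class_Kinf (\<lambda>s. c * s\<^sup>2)"
  unfolding class_Kinf_def class_K_def
proof (intro conjI)
  assume c: "c > 0"
  show "continuous_on {0..} (\<lambda>s::real. c * s\<^sup>2)" by (intro continuous_intros)
  show "strict_mono_on {0..} (\<lambda>s::real. c * s\<^sup>2)"
    unfolding strict_mono_on_def using c by (auto intro!: power_strict_mono)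
  show "c * 0\<^sup>2 = (0::real)" by simp
  show "filterlim (\<lambda>s::real. c * s\<^sup>2) at_top at_top"
    by (rule filterlim_tendsto_pos_mult_at_top[OF tendsto_const c])
       (simp add: filterlim_pow_at_top filterlim_ident)
qed

lemma class_Kinf_id: "class_Kinf (\<lambda>s. s)"
  unfolding class_Kinf_def class_K_def strict_mono_on_def
  by (auto intro: continuous_intros filterlim_ident)

lemma class_Kinf_sqrt: "c > 0 \<Longrightarrow> class_Kinf (\<lambda>s. sqrt (s / c))"
  unfolding class_Kinf_def class_K_def
proof (intro conjI)
  assume c: "c > 0"
  show "continuous_on {0..} (\<lambda>s::real. sqrt (s / c))" using c by (intro continuous_intros) auto
  show "strict_mono_on {0..} (\<lambda>s::real. sqrt (s / c))"
    unfolding strict_mono_on_def using c by (auto simp: divide_strict_right_mono)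
  show "sqrt (0 / c) = 0" by simp
  show "filterlim (\<lambda>s::real. sqrt (s / c)) at_top at_top"
    apply (rule filterlim_compose[OF sqrt_at_top])
    using filterlim_tendsto_pos_mult_at_top[OF tendsto_const[of "inverse c"] _ filterlim_ident] c
    by (simp add: field_simps)
qed

lemma class_K_powr: assumes m1: "m1 > 0" and m2: "m2 > 0"
  shows "class_K (\<lambda>s. s powr m1 + s powr m2)"
  unfolding class_K_def
proof (intro conjI)
  show "continuous_on {0..} (\<lambda>s::real. s powr m1 + s powr m2)"
    using m1 m2 by (intro continuous_intros continuous_on_powr') auto
  show "strict_mono_on {0..} (\<lambda>s::real. s powr m1 + s powr m2)"
    unfolding strict_mono_on_def using m1 m2
    by (auto intro!: add_strict_mono powr_less_mono2)
  show "0 powr m1 + 0 powr m2 = (0::real)" by simp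
qed

lemma indef_int:
  fixes a :: "real \<Rightarrow> real"
  assumes a: "locally_integrable_nonneg a"
  shows "continuous_on {0..} (\<lambda>t. integral {0..t} a)"
    and "\<And>t. integral {0..t} a \<ge> 0"
    and "\<And>s t. s \<le> t \<Longrightarrow> integral {0..s} a \<le> integral {0..t} a"
proof -
  have nn: "\<forall>t\<ge>0. a t \<ge> 0" and int: "\<forall>b\<ge>0. a integrable_on {0..b}"
    using a unfolding locally_integrable_nonneg_def by auto
  show "integral {0..t} a \<ge> 0" for t
  proof (cases "t \<ge> 0")
    case True then show ?thesis using nn int by (intro integral_nonneg) auto
  qed simp
  show "integral {0..s} a \<le> integral {0..t} a" if st: "s \<le> t" for s t
  proof (cases "s \<ge> 0")
    case True
    show ?thesis
      apply (rule integral_subset_le)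
      using st True int nn by (auto intro: integrable_on_subinterval)
  next
    case False
    have "integral {0..t} a \<ge> 0"
    proof (cases "t \<ge> 0")
      case True then show ?thesis using nn int by (intro integral_nonneg) auto
    qed simp
    then show ?thesis using False by simp
  qed
  show "continuous_on {0..} (\<lambda>t. integral {0..t} a)"
  proof (rule continuous_on_eq_continuous_within[THEN iffD2], intro ballI)
    fix t :: real assume t: "t \<in> {0..}"
    have "continuous_on {0..t+1} (\<lambda>t. integral {0..t} a)"
      by (rule indefinite_integral_continuous_1) (use int t in auto)
    then have "continuous (at t within {0..t+1}) (\<lambda>t. integral {0..t} a)"
      using t by (simp add: continuous_on_eq_continuous_within)
    moreover have "at t within {0..} = at t within {0..t+1}"
      by (rule at_within_nhd[of t "{..<t+1}"]) auto
    ultimately show "continuous (at t within {0..}) (\<lambda>t. integral {0..t} a)"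
      by (simp add: continuous_within)
  qed
qed

lemma class_KL_beta:
  fixes I :: "real \<Rightarrow> real"
  assumes K: "K > 0" and k: "k > 0" and Ic: "continuous_on {0..} I" and Inn: "\<And>t. I t \<ge> 0"
    and Imono: "\<And>s t. s \<le> t \<Longrightarrow> I s \<le> I t" and Ilim: "filterlim I at_top at_top"
  shows "class_KL (\<lambda>r t. K * r / sqrt (1 + k * I t))"
  unfolding class_KL_def
proof (intro conjI allI impI)
  have pos: "sqrt (1 + k * I t) > 0" for t using Inn[of t] k by (simp add: add_pos_nonneg)
  show "continuous_on ({0..} \<times> {0..}) (\<lambda>(r, t). K * r / sqrt (1 + k * I t))"
  proof -
    have "continuous_on ({0..} \<times> {0..}) (\<lambda>p. I (snd p))"
      by (rule continuous_on_compose2[OF Ic]) (auto intro: continuous_intros)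
    then have "continuous_on ({0..} \<times> {0..}) (\<lambda>p. K * fst p / sqrt (1 + k * I (snd p)))"
      using pos by (intro continuous_intros) (auto simp: less_imp_neq[symmetric])
    then show ?thesis by (simp add: case_prod_beta)
  qed
  fix t :: real
  assume t: "t \<ge> 0"
  show "class_K (\<lambda>r. K * r / sqrt (1 + k * I t))"
    unfolding class_K_def strict_mono_on_def using pos[of t] K
    by (auto intro!: continuous_intros divide_strict_right_mono)
next
  fix r :: real assume r: "r \<ge> 0"
  have pos: "sqrt (1 + k * I t) > 0" for t using Inn[of t] k by (simp add: add_pos_nonneg)
  show "antimono_on {0..} (\<lambda>t. K * r / sqrt (1 + k * I t))"
    unfolding monotone_on_def
  proof (intro ballI impI)
    fix s t :: real assume st: "s \<le> t"
    have "sqrt (1 + k * I s) \<le> sqrt (1 + k * I t)" using Imono[OF st] k by (simp add: mult_left_mono)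
    then show "K * r / sqrt (1 + k * I t) \<le> K * r / sqrt (1 + k * I s)"
      using pos K r by (intro divide_left_mono) auto
  qed
  have "filterlim (\<lambda>t. sqrt (1 + k * I t)) at_top at_top"
    apply (rule filterlim_compose[OF sqrt_at_top])
    apply (rule filterlim_tendsto_add_at_top[OF tendsto_const])
    by (rule filterlim_tendsto_pos_mult_at_top[OF tendsto_const k Ilim])
  then have "((\<lambda>t. inverse (sqrt (1 + k * I t))) \<longlongrightarrow> 0) at_top" by (rule tendsto_inverse_0_at_top)
  then have "((\<lambda>t. (K * r) * inverse (sqrt (1 + k * I t))) \<longlongrightarrow> (K*r) * 0) at_top"
    by (intro tendsto_mult tendsto_const)
  then show "((\<lambda>t. K * r / sqrt (1 + k * I t)) \<longlongrightarrow> 0) at_top" by (simp add: divide_inverse)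
qed



lemma small_powr:
  fixes m1 m2 M :: real
  assumes m1: "m1 > 2" and m2: "m2 > 2" and M: "M \<ge> 0"
  obtains R' where "R' > 0" "\<forall>s\<in>{0..R'}. s powr m1 + s powr m2 \<le> s\<^sup>2 / (2 * (1 + M))"
proof -
  define q where "q = 1 / (4 * (1 + M))"
  define mm where "mm = min m1 m2"
  define R' where "R' = q powr (1 / (mm - 2))"
  have q: "q > 0" "q \<le> 1" using M by (auto simp: q_def)
  have mm: "mm > 2" using m1 m2 by (auto simp: mm_def)
  have R'pos: "R' > 0" using q by (simp add: R'_def)
  have R'le: "R' \<le> 1" unfolding R'_def using q mm by (intro powr_le1) auto
  have R'q: "R' powr (mm - 2) = q" unfolding R'_def using q mm by (simp add: powr_powr)
  have one: "s powr m \<le> s\<^sup>2 * q" if s: "s \<in> {0..R'}" and m: "m \<ge> mm" for s m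
  proof (cases "s = 0")
    case True then show ?thesis using q by simp
  next
    case False
    then have s0: "s > 0" using s by auto
    have "s powr m = s powr 2 * s powr (m - 2)" by (simp add: powr_add[symmetric])
    also have "s powr 2 = s\<^sup>2" using s0 by (simp add: powr_numeral)
    also have "s powr (m - 2) \<le> s powr (mm - 2)" using m s R'le by (intro powr_mono') auto
    also have "s powr (mm - 2) \<le> R' powr (mm - 2)" using s mm by (intro powr_mono2) auto
    finally show ?thesis using R'q s0 by (simp add: mult_left_mono)
  qed
  show ?thesis
  proof (rule that[OF R'pos], intro ballI)
    fix s assume s: "s \<in> {0..R'}"
    have "s powr m1 + s powr m2 \<le> s\<^sup>2 * q + s\<^sup>2 * q"
      using one[OF s, of m1] one[OF s, of m2] unfolding mm_def by linarith
    also have "\<dots> = s\<^sup>2 / (2 * (1 + M))"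
    proof -
      have "2 * q = 1 / (2 * (1 + M))" unfolding q_def using M by (simp add: field_simps)
      then have "s\<^sup>2 * q + s\<^sup>2 * q = s\<^sup>2 * (1 / (2 * (1 + M)))"
        by (metis distrib_left mult_2)
      then show ?thesis by simp
    qed
    finally show "s powr m1 + s powr m2 \<le> s\<^sup>2 / (2 * (1 + M))" .
  qed
qed

lemma norm_bound:
  fixes c C q w n n0 v v0 :: real
  assumes c: "c > 0" and C: "C > 0" and q: "q \<ge> 1" and w: "w \<ge> 0"
    and n: "n \<ge> 0" and n0: "n0 \<ge> 0" and low: "c * n\<^sup>2 \<le> v" and up: "v \<le> v0 / q + w"
    and v0: "v0 \<le> C * n0\<^sup>2"
  shows "n \<le> sqrt (C / c) * n0 / sqrt q + sqrt (w / c)"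
proof -
  have "v0 / q \<le> C * n0\<^sup>2 / q" using v0 q by (simp add: divide_right_mono)
  then have "c * n\<^sup>2 \<le> C * n0\<^sup>2 / q + w" using low up by linarith
  then have "n\<^sup>2 \<le> (C / c) * n0\<^sup>2 / q + w / c" using c by (simp add: field_simps)
  then have "sqrt (n\<^sup>2) \<le> sqrt ((C / c) * n0\<^sup>2 / q + w / c)" by (rule real_sqrt_le_mono)
  also have "\<dots> \<le> sqrt ((C / c) * n0\<^sup>2 / q) + sqrt (w / c)"
    by (rule sqrt_add_le_add_sqrt) (use c C q w in auto)
  also have "sqrt ((C / c) * n0\<^sup>2 / q) = sqrt (C / c) * n0 / sqrt q"
    using n0 by (simp add: real_sqrt_mult real_sqrt_divide)
  finally show ?thesis using n by simp
qed


theorem theorem3p5: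
  fixes A :: "real \<Rightarrow> 'x::{real_inner, complete_space} \<Rightarrow> 'x"
    and D :: "real \<Rightarrow> 'x set"
    and F :: "real \<Rightarrow> 'x \<Rightarrow> 'u::real_normed_vector \<Rightarrow> 'x"
    and P P' :: "real \<Rightarrow> 'x \<Rightarrow>\<^sub>L 'x"
    and a1 a2 :: "real \<Rightarrow> real"
    and M m1 m2 :: real
    and \<zeta> :: "real \<Rightarrow> real"
  assumes gen: "\<forall>t\<ge>0. generates_analytic_semigroup (A t) (D t)"
    and P_deriv: "\<forall>t\<ge>0. (P has_vector_derivative P' t) (at t within {0..})"
    and P'_cont: "continuous_on {0..} P'"
    and P_bounded: "\<exists>c. \<forall>t\<ge>0. norm (P t) \<le> c"
    and P_coercive: "\<exists>c>0. \<forall>t\<ge>0. \<forall>x. inner (P t x) x \<ge> c * (norm x)\<^sup>2"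
    and P_posdef: "\<forall>t\<ge>0. positive_definite_op (P t)"
    and a1: "locally_integrable_nonneg a1"
    and a2: "locally_integrable_nonneg a2"
    and a1_div: "filterlim (\<lambda>t. integral {0..t} a1) at_top at_top"
    and M: "M \<ge> 0" and a2_le: "\<forall>t\<ge>0. a2 t \<le> M * a1 t"
    and m1: "m1 > 2" and m2: "m2 > 2"
    and \<zeta>: "class_K \<zeta>"
    and ineq: "\<forall>t\<ge>0. \<forall>x\<in>D t. \<forall>u.
        inner (P t x) (A t x) + inner (P t (A t x)) x + inner (P' t x) x
          + 2 * inner (F t x u) (P t x)
        \<le> - a1 t * (norm x)\<^sup>2 + a2 t * (norm x powr m1 + norm x powr m2) + \<zeta> (norm u)"
  shows "LiISS_LF A D F (\<lambda>t x. inner (P t x) x) \<and> LiISS A D F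
     \<and> ((\<forall>t\<ge>0. a2 t = 0) \<longrightarrow> iISS_LF A D F (\<lambda>t x. inner (P t x) x) \<and> iISS A D F)"
  proof -
  obtain C0 where C0: "\<forall>t\<ge>0. norm (P t) \<le> C0" using P_bounded by blast
  define C where "C = max C0 1"
  have Cpos: "C > 0" unfolding C_def by simp
  have CP: "\<forall>t\<ge>0. norm (P t) \<le> C" using C0 unfolding C_def by (meson max.coboundedI1)
  obtain c where c: "c > 0" and cP: "\<forall>t\<ge>0. \<forall>x. inner (P t x) x \<ge> c * (norm x)\<^sup>2"
    using P_coercive by blast
  have sym: "\<forall>t\<ge>0. \<forall>y z. inner (P t y) z = inner y (P t z)"
    using P_posdef unfolding positive_definite_op_def by blast
  have Vup: "inner (P t y) y \<le> C * (norm y)\<^sup>2" if t: "t \<ge> 0" for t and y :: 'x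
  proof -
    have "inner (P t y) y \<le> norm (P t y) * norm y" by (rule norm_cauchy_schwarz)
    also have "\<dots> \<le> (norm (P t) * norm y) * norm y" by (intro mult_right_mono norm_blinfun) auto
    also have "\<dots> \<le> (C * norm y) * norm y" using CP t by (intro mult_right_mono) auto
    finally show ?thesis by (simp add: power2_eq_square mult.assoc)
  qed
  have Vlow: "c * (norm y)\<^sup>2 \<le> inner (P t y) y" if "t \<ge> 0" for t and y :: 'x using cP that by auto
  have Vnn: "\<forall>t\<ge>0. \<forall>y. inner (P t y) y \<ge> 0"
  proof (intro allI impI)
    fix t :: real and y :: 'x assume t: "t \<ge> 0"
    have "0 \<le> c * (norm y)\<^sup>2" using c by simp
    then show "0 \<le> inner (P t y) y" using Vlow[OF t, of y] by linarith
  qed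
  have a1nn: "\<forall>t\<ge>0. a1 t \<ge> 0" and a1int: "\<forall>b\<ge>0. a1 integrable_on {0..b}"
    using a1 unfolding locally_integrable_nonneg_def by auto
  have a2nn: "\<forall>t\<ge>0. a2 t \<ge> 0" and a2int: "\<forall>b\<ge>0. a2 integrable_on {0..b}"
    using a2 unfolding locally_integrable_nonneg_def by auto
  have Pc: "continuous_on {0..} P"
  proof (rule continuous_on_eq_continuous_within[THEN iffD2], intro ballI)
    fix t :: real assume "t \<in> {0..}"
    then have "(P has_vector_derivative P' t) (at t within {0..})" using P_deriv by auto
    then show "continuous (at t within {0..}) P"
      by (rule has_vector_derivative_continuous)
  qed
  have \<zeta>c: "continuous_on {0..} \<zeta>" and \<zeta>0: "\<zeta> 0 = 0" and \<zeta>m: "strict_mono_on {0..} \<zeta>"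
    using \<zeta> unfolding class_K_def by auto
  have \<zeta>nn: "\<zeta> y \<ge> 0" if "y \<ge> 0" for y
  proof (cases "y = 0")
    case True then show ?thesis using \<zeta>0 by simp
  next
    case False
    then have "\<zeta> 0 < \<zeta> y" using that by (intro strict_mono_onD[OF \<zeta>m]) auto
    then show ?thesis using \<zeta>0 by simp
  qed
  define LHS where "LHS = (\<lambda>t (y::'x) v. inner (P t y) (A t y) + inner (P t (A t y)) y + inner (P' t y) y
          + 2 * inner (F t y v) (P t y))"
  have dtraj: "((\<lambda>s. inner (P s (x s)) (x s)) has_real_derivative LHS t (x t) (u t)) (at t)"
    if sol: "classical_solution A D F u x0 x" and t: "t > 0" for x0 u x t
  proof -
    have dx: "(x has_vector_derivative (A t (x t) + F t (x t) (u t))) (at t)"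
      using sol t unfolding classical_solution_def by blast
    have "(P has_vector_derivative P' t) (at t within {0..})" using P_deriv t by auto
    then have dP: "(P has_vector_derivative P' t) (at t)" using t by (subst (asm) at_within_interior) auto
    have e1: "inner (P t (F t (x t) (u t))) (x t) = inner (F t (x t) (u t)) (P t (x t))"
      using sym t by auto
    have e2: "inner (P t (x t)) (F t (x t) (u t)) = inner (F t (x t) (u t)) (P t (x t))"
      by (rule inner_commute)
    from deriv_V[OF dP dx] show ?thesis
      by (rule DERIV_cong) (simp add: LHS_def inner_add_right inner_add_left blinfun.add_right e1 e2)
  qed
  obtain R' where R'pos: "R' > 0" and R': "\<forall>s\<in>{0..R'}. s powr m1 + s powr m2 \<le> s\<^sup>2 / (2 * (1 + M))"
    using small_powr[OF m1 m2 M] by blast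
  have dbound: "LHS s (x s) (u s) \<le> - (1 / (2 * C)) * a1 s * inner (P s (x s)) (x s) + \<zeta> (norm (u s))"
    if sol: "classical_solution A D F u x0 x" and s: "s > 0"
      and good: "(\<forall>t\<ge>0. a2 t = 0) \<or> norm (x s) \<le> R'" for x0 u x s
  proof -
    let ?n = "norm (x s)"
    have xD: "x s \<in> D s" using sol s unfolding classical_solution_def by blast
    have base: "LHS s (x s) (u s) \<le> - a1 s * ?n\<^sup>2 + a2 s * (?n powr m1 + ?n powr m2) + \<zeta> (norm (u s))"
      using ineq s xD unfolding LHS_def by auto
    have a1s: "a1 s \<ge> 0" using a1nn s by auto
    have A2: "a2 s * (?n powr m1 + ?n powr m2) \<le> a1 s * ?n\<^sup>2 / 2"
    proof (cases "\<forall>t\<ge>0. a2 t = 0")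
      case True then have "a2 s = 0" using s by auto
      then show ?thesis using a1s by simp
    next
      case False
      then have nx: "?n \<le> R'" using good by auto
      have th: "?n powr m1 + ?n powr m2 \<le> ?n\<^sup>2 / (2 * (1 + M))" using R' nx by auto
      have thnn: "?n powr m1 + ?n powr m2 \<ge> 0" by simp
      have "a2 s * (?n powr m1 + ?n powr m2) \<le> (M * a1 s) * (?n powr m1 + ?n powr m2)"
        using a2_le s thnn by (intro mult_right_mono) auto
      also have "\<dots> \<le> (M * a1 s) * (?n\<^sup>2 / (2 * (1 + M)))"
        using th M a1s by (intro mult_left_mono) auto
      also have "\<dots> = (M / (1 + M)) * (a1 s * ?n\<^sup>2 / 2)"
        using M by (simp add: field_simps)
      also have "\<dots> \<le> a1 s * ?n\<^sup>2 / 2"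
        using M a1s by (intro mult_left_le_one_le) auto
      finally show ?thesis .
    qed
    have "inner (P s (x s)) (x s) \<le> C * ?n\<^sup>2" using Vup s by auto
    then have "a1 s * inner (P s (x s)) (x s) \<le> a1 s * (C * ?n\<^sup>2)" using a1s by (rule mult_left_mono)
    then have A1: "a1 s * inner (P s (x s)) (x s) / (2 * C) \<le> a1 s * ?n\<^sup>2 / 2"
      using Cpos by (simp add: field_simps)
    have "- (1 / (2 * C)) * a1 s * inner (P s (x s)) (x s) = - (a1 s * inner (P s (x s)) (x s) / (2 * C))"
      by simp
    then show ?thesis using base A1 A2 by linarith
  qed
  define k where "k = 1 / (2 * C)"
  have kpos: "k > 0" using Cpos by (simp add: k_def)
  define I where "I = (\<lambda>t. integral {0..t} a1)"
  have Ic: "continuous_on {0..} I" and Inn: "\<And>t. I t \<ge> 0" and Imono: "\<And>s t. s \<le> t \<Longrightarrow> I s \<le> I t"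
    using indef_int[OF a1] unfolding I_def by auto
  have traj: "inner (P t (x t)) (x t) \<le> inner (P 0 x0) x0 / (1 + k * I t) + integral {0..t} (\<lambda>r. \<zeta> (norm (u r)))"
    if sol: "classical_solution A D F u x0 x" and uc: "continuous_on {0..} u" and t: "t \<ge> 0"
      and good: "\<forall>s\<in>{0<..<t}. (\<forall>t\<ge>0. a2 t = 0) \<or> norm (x s) \<le> R'" for x0 u x t
  proof -
    have x0: "x 0 = x0" and xc: "continuous_on {0..} x" using sol unfolding classical_solution_def by auto
    have zc: "continuous_on {0..} (\<lambda>r. \<zeta> (norm (u r)))"
      by (rule continuous_on_compose2[OF \<zeta>c]) (auto intro: continuous_intros uc)
    have zct: "continuous_on {0..t} (\<lambda>r. \<zeta> (norm (u r)))" by (rule continuous_on_subset[OF zc]) auto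
    have zi: "(\<lambda>r. \<zeta> (norm (u r))) integrable_on {0..s}" if "s \<le> t" for s
      by (rule integrable_continuous_interval, rule continuous_on_subset[OF zc]) auto
    have "inner (P t (x t)) (x t) \<le> inner (P 0 (x 0)) (x 0) / (1 + k * integral {0..t} a1)
           + integral {0..t} (\<lambda>r. \<zeta> (norm (u r)))"
    proof (rule comparison[where dV = "\<lambda>s. LHS s (x s) (u s)" and dw = "\<lambda>s. \<zeta> (norm (u s))"])
      show "t \<ge> 0" "k \<ge> 0" using t kpos by auto
      have Pct: "continuous_on {0..t} P" by (rule continuous_on_subset[OF Pc]) auto
      have xct: "continuous_on {0..t} x" by (rule continuous_on_subset[OF xc]) auto
      show "continuous_on {0..t} (\<lambda>s. inner (P s (x s)) (x s))"
        using Pct xct by (intro continuous_intros)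
      show "\<forall>s\<in>{0..t}. 0 \<le> inner (P s (x s)) (x s)" using Vnn by auto
      show "continuous_on {0..t} (\<lambda>s. integral {0..s} (\<lambda>r. \<zeta> (norm (u r))))"
        by (rule indefinite_integral_continuous_1, rule integrable_continuous_interval[OF zct])
      show "integral {0..0} (\<lambda>r. \<zeta> (norm (u r))) = 0" by simp
      show "\<forall>s\<in>{0..t}. 0 \<le> integral {0..s} (\<lambda>r. \<zeta> (norm (u r)))"
      proof
        fix s assume "s \<in> {0..t}"
        then show "0 \<le> integral {0..s} (\<lambda>r. \<zeta> (norm (u r)))"
          by (intro integral_nonneg zi) (auto simp: \<zeta>nn)
      qed
      show "\<forall>s\<in>{0<..<t}. ((\<lambda>s. inner (P s (x s)) (x s)) has_real_derivative LHS s (x s) (u s)) (at s)"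
        using dtraj[OF sol] by auto
      show "\<forall>s\<in>{0<..<t}. ((\<lambda>s. integral {0..s} (\<lambda>r. \<zeta> (norm (u r)))) has_real_derivative \<zeta> (norm (u s))) (at s)"
      proof
        fix s assume s: "s \<in> {0<..<t}"
        have "((\<lambda>s. integral {0..s} (\<lambda>r. \<zeta> (norm (u r)))) has_real_derivative \<zeta> (norm (u s))) (at s within {0..t})"
          using s by (intro integral_has_real_derivative[OF zct]) auto
        then show "((\<lambda>s. integral {0..s} (\<lambda>r. \<zeta> (norm (u r)))) has_real_derivative \<zeta> (norm (u s))) (at s)"
          using s by (subst (asm) at_within_interior) auto
      qed
      show "\<forall>s\<in>{0<..<t}. LHS s (x s) (u s) \<le> - k * a1 s * inner (P s (x s)) (x s) + \<zeta> (norm (u s))"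
        using dbound[OF sol] good unfolding k_def by auto
      show "\<forall>s\<in>{0..t}. 0 \<le> a1 s" using a1nn by auto
      show "a1 integrable_on {0..t}" using a1int t by auto
    qed
    then show ?thesis using x0 unfolding I_def by simp
  qed
  define \<beta> where "\<beta> = (\<lambda>r t. sqrt (C / c) * r / sqrt (1 + k * I t))"
  define \<sigma> where "\<sigma> = (\<lambda>s. sqrt (s / c))"
  have fin: "norm (x t) \<le> \<beta> (norm x0) t + \<sigma> (integral {0..t} (\<lambda>s. \<zeta> (norm (u s))))"
    if sol: "classical_solution A D F u x0 x" and uc: "continuous_on {0..} u" and t: "t \<ge> 0"
      and good: "\<forall>s\<in>{0<..<t}. (\<forall>t\<ge>0. a2 t = 0) \<or> norm (x s) \<le> R'" for x0 u x t
  proof -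
    have zc: "continuous_on {0..} (\<lambda>r. \<zeta> (norm (u r)))"
      by (rule continuous_on_compose2[OF \<zeta>c]) (auto intro: continuous_intros uc)
    have zi: "(\<lambda>r. \<zeta> (norm (u r))) integrable_on {0..t}"
      by (rule integrable_continuous_interval, rule continuous_on_subset[OF zc]) auto
    have wnn: "integral {0..t} (\<lambda>r. \<zeta> (norm (u r))) \<ge> 0"
      by (rule integral_nonneg[OF zi]) (simp add: \<zeta>nn)
    have q: "1 + k * I t \<ge> 1" using kpos Inn[of t] by simp
    show ?thesis unfolding \<beta>_def \<sigma>_def
      by (rule norm_bound[OF c Cpos q wnn norm_ge_zero norm_ge_zero Vlow[OF t] traj[OF sol uc t good] Vup])
        simp
  qed
  have KL: "class_KL \<beta>" unfolding \<beta>_def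
    using c Cpos by (intro class_KL_beta kpos Ic Inn Imono a1_div[folded I_def]) auto
  have S: "class_Kinf \<sigma>" unfolding \<sigma>_def by (rule class_Kinf_sqrt[OF c])
  have C1: "C1_nonneg_functional (\<lambda>t x. inner (P t x) x)" by (rule C1_V[OF P_deriv P'_cont sym Vnn])
  have alphas: "\<exists>\<alpha>1 \<alpha>2. class_Kinf \<alpha>1 \<and> class_Kinf \<alpha>2 \<and>
      (\<forall>t\<ge>0. \<forall>x. \<alpha>1 (norm x) \<le> inner (P t x) x \<and> inner (P t x) x \<le> \<alpha>2 (norm x))"
    using class_K_sq[OF c] class_K_sq[OF Cpos] Vlow Vup by blast
  have LF1: "LF_decay A D F (\<lambda>t x. inner (P t x) x) (\<lambda>t. (1 + M) * a1 t) a2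
      (\<lambda>s. (1 / (1 + M)) * s\<^sup>2) (\<lambda>s. s powr m1 + s powr m2) \<zeta>"
    unfolding LF_decay_def
  proof (intro conjI)
    show "locally_integrable_nonneg (\<lambda>t. (1 + M) * a1 t)"
      unfolding locally_integrable_nonneg_def using a1nn a1int M
      by (auto intro!: integrable_on_cmult_left[where c = "1 + M", simplified])
    show "locally_integrable_nonneg a2" by (rule a2)
    have "filterlim (\<lambda>t. (1 + M) * integral {0..t} a1) at_top at_top"
      using M by (intro filterlim_tendsto_pos_mult_at_top[OF tendsto_const _ a1_div]) auto
    then show "filterlim (\<lambda>t. integral {0..t} (\<lambda>t. (1 + M) * a1 t)) at_top at_top" by simp
    show "\<forall>t\<ge>0. a2 t \<le> (1 + M) * a1 t"
    proof (intro allI impI)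
      fix t :: real assume t: "t \<ge> 0"
      have "a2 t \<le> M * a1 t" using a2_le t by blast
      moreover have "a1 t \<ge> 0" using a1nn t by blast
      ultimately show "a2 t \<le> (1 + M) * a1 t" by (simp add: distrib_right)
    qed
    show "class_K (\<lambda>s. (1 / (1 + M)) * s\<^sup>2)" using class_K_sq[of "1 / (1 + M)"] M
      unfolding class_Kinf_def by auto
    show "class_K (\<lambda>s. s powr m1 + s powr m2)" using m1 m2 by (intro class_K_powr) auto
    show "\<exists>R'>0. \<forall>s\<in>{0..R'}. s powr m1 + s powr m2 \<le> 1 / (1 + M) * s\<^sup>2"
    proof (intro exI conjI ballI)
      show "R' > 0" by (rule R'pos)
      fix s assume s: "s \<in> {0..R'}"
      have "s\<^sup>2 / (2 * (1 + M)) \<le> 1 / (1 + M) * s\<^sup>2" using M by (simp add: field_simps)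
      then show "s powr m1 + s powr m2 \<le> 1 / (1 + M) * s\<^sup>2" using R' s by fastforce
    qed
    show "class_K \<zeta>" by (rule \<zeta>)
    show "\<forall>x0 u x. x0 \<in> D 0 \<longrightarrow> continuous_on {0..} u \<longrightarrow> classical_solution A D F u x0 x \<longrightarrow>
        (\<forall>t>0. \<exists>d. ((\<lambda>s. inner (P s (x s)) (x s)) has_real_derivative d) (at t) \<and>
            d \<le> - ((1 + M) * a1 t) * (1 / (1 + M) * (norm (x t))\<^sup>2)
               + a2 t * (norm (x t) powr m1 + norm (x t) powr m2) + \<zeta> (norm (u t)))"
    proof (intro allI impI exI conjI)
      fix x0 u x t assume sol: "classical_solution A D F u x0 x" and t: "(t::real) > 0"
      show "((\<lambda>s. inner (P s (x s)) (x s)) has_real_derivative LHS t (x t) (u t)) (at t)"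
        by (rule dtraj[OF sol t])
      have xD: "x t \<in> D t" using sol t unfolding classical_solution_def by blast
      have "- ((1 + M) * a1 t) * (1 / (1 + M) * (norm (x t))\<^sup>2) = - a1 t * (norm (x t))\<^sup>2"
        using M by (simp add: field_simps)
      then show "LHS t (x t) (u t) \<le> - ((1 + M) * a1 t) * (1 / (1 + M) * (norm (x t))\<^sup>2)
               + a2 t * (norm (x t) powr m1 + norm (x t) powr m2) + \<zeta> (norm (u t))"
        using ineq t xD unfolding LHS_def by auto
    qed
  qed
  have part1: "LiISS_LF A D F (\<lambda>t x. inner (P t x) x)"
    unfolding LiISS_LF_def using C1 alphas LF1 by blast
  define R where "R = min 1 (min (R' / 2) (c * R'\<^sup>2 / (2 * (C + 1))))"
  have Rpos: "R > 0" using R'pos c Cpos by (simp add: R_def)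
  have R1: "R \<le> 1" unfolding R_def by (rule min.cobounded1)
  have R2: "R \<le> R' / 2" unfolding R_def by (meson min.cobounded1 min.cobounded2 order_trans)
  have R3: "R \<le> c * R'\<^sup>2 / (2 * (C + 1))" unfolding R_def by (meson min.cobounded2 order_trans)
  have part2: "LiISS A D F"
    unfolding LiISS_def
  proof (intro exI conjI allI impI)
    show "R > 0" by (rule Rpos)
    show "class_K \<zeta>" by (rule \<zeta>)
    show "class_K \<zeta>" by (rule \<zeta>)
    show "class_Kinf (\<lambda>s. s)" by (rule class_Kinf_id)
    show "class_Kinf \<sigma>" by (rule S)
    show "class_KL \<beta>" by (rule KL)
    fix x0 u x t
    assume x0D: "x0 \<in> D 0" and uc: "continuous_on {0..} u" and sol: "classical_solution A D F u x0 x"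
      and small: "\<forall>t>0. norm x0 + integral {0..t} (\<lambda>s. \<zeta> (norm (u s))) \<le> R"
      and t: "(t::real) \<ge> 0"
    have x0: "x 0 = x0" and xc: "continuous_on {0..} x" using sol unfolding classical_solution_def by auto
    have zc: "continuous_on {0..} (\<lambda>r. \<zeta> (norm (u r)))"
      by (rule continuous_on_compose2[OF \<zeta>c]) (auto intro: continuous_intros uc)
    have wnn: "integral {0..s} (\<lambda>r. \<zeta> (norm (u r))) \<ge> 0" if "s \<ge> 0" for s
    proof -
      have "(\<lambda>r. \<zeta> (norm (u r))) integrable_on {0..s}"
        by (rule integrable_continuous_interval, rule continuous_on_subset[OF zc]) auto
      then show ?thesis by (rule integral_nonneg) (simp add: \<zeta>nn)
    qed
    have nx0: "norm x0 \<le> R" using small[rule_format, of 1] wnn[of 1] by auto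
    have allsmall: "norm (x s) < R'" if s: "s \<ge> 0" for s
    proof (rule ccontr)
      assume "\<not> norm (x s) < R'"
      define S where "S = {r \<in> {0..s}. R' \<le> norm (x r)}"
      have Sne: "S \<noteq> {}" using s \<open>\<not> norm (x s) < R'\<close> unfolding S_def by auto
      have Sc: "closed S" unfolding S_def
        by (rule continuous_on_closed_Collect_le) (auto intro!: continuous_intros continuous_on_subset[OF xc])
      have Sb: "bdd_below S" unfolding S_def by (rule bdd_belowI[of _ 0]) auto
      define T where "T = Inf S"
      have TS: "T \<in> S" unfolding T_def by (rule closed_contains_Inf[OF Sne Sb Sc])
      have T0: "T \<ge> 0" and nT: "R' \<le> norm (x T)" using TS unfolding S_def by auto
      have Tne: "T \<noteq> 0" using nT x0 nx0 R2 R'pos by auto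
      have below: "norm (x r) \<le> R'" if r: "r \<in> {0<..<T}" for r
      proof (rule ccontr)
        assume "\<not> norm (x r) \<le> R'"
        then have "r \<in> S" using r TS unfolding S_def by auto
        then have "T \<le> r" unfolding T_def using Sb by (rule cInf_lower)
        then show False using r by auto
      qed
      have tr: "inner (P T (x T)) (x T) \<le> inner (P 0 x0) x0 / (1 + k * I T) + integral {0..T} (\<lambda>r. \<zeta> (norm (u r)))"
        using below by (intro traj[OF sol uc T0]) auto
      have q: "1 + k * I T \<ge> 1" using kpos Inn[of T] by simp
      have V0nn: "inner (P 0 x0) x0 \<ge> 0" using Vnn by auto
      have "inner (P 0 x0) x0 / (1 + k * I T) \<le> inner (P 0 x0) x0"
      proof -
        have "inner (P 0 x0) x0 * 1 \<le> inner (P 0 x0) x0 * (1 + k * I T)"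
          by (rule mult_left_mono[OF q V0nn])
        then show ?thesis using q by (simp add: divide_le_eq)
      qed
      also have "\<dots> \<le> C * (norm x0)\<^sup>2" using Vup by auto
      also have "\<dots> \<le> C * R" 
      proof -
        have "(norm x0)\<^sup>2 \<le> R\<^sup>2" using nx0 by (intro power_mono) auto
        also have "R\<^sup>2 \<le> R" using R1 Rpos by (simp add: power2_eq_square mult_left_le_one_le)
        finally show ?thesis using Cpos by simp
      qed
      finally have A: "inner (P 0 x0) x0 / (1 + k * I T) \<le> C * R" .
      have "norm x0 + integral {0..T} (\<lambda>r. \<zeta> (norm (u r))) \<le> R" using small Tne T0 by auto
      then have B: "integral {0..T} (\<lambda>r. \<zeta> (norm (u r))) \<le> R"
        using norm_ge_zero[of x0] by linarith
      have "(C + 1) * R \<le> c * R'\<^sup>2 / 2" using R3 Cpos by (simp add: field_simps)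
      then have H: "C * R + R \<le> c * R'\<^sup>2 / 2" by (simp add: distrib_right)
      have pos: "c * R'\<^sup>2 > 0" using c R'pos by simp
      have "inner (P T (x T)) (x T) < c * R'\<^sup>2" using tr A B H pos by linarith
      moreover have "c * R'\<^sup>2 \<le> c * (norm (x T))\<^sup>2" using nT R'pos c by (intro mult_left_mono power_mono) auto
      moreover have "c * (norm (x T))\<^sup>2 \<le> inner (P T (x T)) (x T)" using Vlow T0 by auto
      ultimately show False by linarith
    qed
    show "norm (x t) \<le> \<beta> (norm x0) t + \<sigma> (integral {0..t} (\<lambda>s. \<zeta> (norm (u s))))"
      using allsmall by (intro fin[OF sol uc t]) (auto intro: less_imp_le)
  qed
  have part3: "iISS_LF A D F (\<lambda>t x. inner (P t x) x) \<and> iISS A D F" if a2z: "\<forall>t\<ge>0. a2 t = 0"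
  proof
    have LF2: "LF_decay A D F (\<lambda>t x. inner (P t x) x) a1 (\<lambda>_. 0) (\<lambda>s. 1 * s\<^sup>2) (\<lambda>s. 1 * s\<^sup>2) \<zeta>"
      unfolding LF_decay_def
    proof (intro conjI)
      show "locally_integrable_nonneg a1" by (rule a1)
      show "locally_integrable_nonneg (\<lambda>_. 0)" unfolding locally_integrable_nonneg_def by auto
      show "filterlim (\<lambda>t. integral {0..t} a1) at_top at_top" by (rule a1_div)
      show "\<forall>t\<ge>0. 0 \<le> a1 t" by (rule a1nn)
      show "class_K (\<lambda>s. 1 * s\<^sup>2)" "class_K (\<lambda>s. 1 * s\<^sup>2)"
        using class_K_sq[of 1] unfolding class_Kinf_def by auto
      show "\<exists>R'>0. \<forall>s\<in>{0..R'}. 1 * s\<^sup>2 \<le> 1 * (s::real)\<^sup>2" by (rule exI[of _ "1::real"]) simp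
      show "class_K \<zeta>" by (rule \<zeta>)
      show "\<forall>x0 u x. x0 \<in> D 0 \<longrightarrow> continuous_on {0..} u \<longrightarrow> classical_solution A D F u x0 x \<longrightarrow>
        (\<forall>t>0. \<exists>d. ((\<lambda>s. inner (P s (x s)) (x s)) has_real_derivative d) (at t) \<and>
            d \<le> - a1 t * (1 * (norm (x t))\<^sup>2) + 0 * (1 * (norm (x t))\<^sup>2) + \<zeta> (norm (u t)))"
      proof (intro allI impI exI conjI)
        fix x0 u x t assume sol: "classical_solution A D F u x0 x" and t: "(t::real) > 0"
        show "((\<lambda>s. inner (P s (x s)) (x s)) has_real_derivative LHS t (x t) (u t)) (at t)"
          by (rule dtraj[OF sol t])
        have xD: "x t \<in> D t" using sol t unfolding classical_solution_def by blast
        show "LHS t (x t) (u t) \<le> - a1 t * (1 * (norm (x t))\<^sup>2) + 0 * (1 * (norm (x t))\<^sup>2) + \<zeta> (norm (u t))"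
          using ineq t xD a2z unfolding LHS_def by auto
      qed
    qed
    show "iISS_LF A D F (\<lambda>t x. inner (P t x) x)"
      unfolding iISS_LF_def using C1 alphas LF2 by blast
    show "iISS A D F"
      unfolding iISS_def
    proof (intro exI conjI allI impI)
      show "class_K \<zeta>" by (rule \<zeta>)
      show "class_Kinf \<sigma>" by (rule S)
      show "class_KL \<beta>" by (rule KL)
      fix x0 u x t
      assume "x0 \<in> D 0" and uc: "continuous_on {0..} u" and sol: "classical_solution A D F u x0 x"
        and t: "(t::real) \<ge> 0"
      show "norm (x t) \<le> \<beta> (norm x0) t + \<sigma> (integral {0..t} (\<lambda>s. \<zeta> (norm (u s))))"
        using a2z by (intro fin[OF sol uc t]) auto
    qed
  qed
  show ?thesis using part1 part2 part3 by blast
qed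

end
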